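(* Let $\Phi:\mathbb{R}^n\to\mathbb{R}$ be of class $C^2$, bounded from below, with Hessian $\nabla^2\Phi$ Lipschitz continuous on bounded sets, and let $\alpha,\beta>0$. Consider the system \[ \ddot x(t)+\alpha\dot x(t)+\beta\nabla^2\Phi(x(t))\dot x(t)+\nabla\Phi(x(t))=0, \] written in phase space as $\dot x=v$, $\dot v=-\alpha v-\nabla\Phi(x)-\beta\nabla^2\Phi(x)v$. Let $(x(t),v(t))$ be a solution defined on $[0,\infty)$ that is bounded. Then $\int_0^\infty\|\dot x(t)\|^2dt<\infty$, $\int_0^\infty\|\nabla\Phi(x(t))\|^2dt<\infty$, $v(t)=\dot x(t)\to0$ and $\nabla\Phi(x(t))\to0$ as $t\to\infty$, and consequently $\operatorname{dist}\big((x(t),v(t)),S\big)\to0$, where $S:=\{(x,v)\in\mathbb{R}^n\times\mathbb{R}^n: v=0,\ \nabla\Phi(x)=0\}$. *)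

theory Defs
  imports "HOL-Analysis.Analysis"
begin

end

theory Submission
  imports Defs
begin


lemma mvt1:
  fixes f :: "real \<Rightarrow> 'a::real_normed_vector"
  assumes d: "\<And>t. t \<ge> 0 \<Longrightarrow> (f has_vector_derivative f' t) (at t within {0..})"
    and b: "\<And>t. t \<ge> 0 \<Longrightarrow> norm (f' t) \<le> K"
    and s: "s \<ge> 0" and t: "t \<ge> 0"
  shows "norm (f s - f t) \<le> K * \<bar>s - t\<bar>"
proof -
  have "norm (f s - f t) \<le> K * norm (s - t)"
  proof (rule differentiable_bound[where S="{0..}" and f'="\<lambda>t h. h *\<^sub>R f' t"])
    show "convex {0::real..}" by simp
    show "(f has_derivative (\<lambda>h. h *\<^sub>R f' x)) (at x within {0..})" if "x \<in> {0..}" for x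
      using d[of x] that by (simp add: has_vector_derivative_def)
    show "onorm (\<lambda>h. h *\<^sub>R f' x) \<le> K" if "x \<in> {0..}" for x
      by (rule onorm_le) (use mult_right_mono[OF b[of x] abs_ge_zero] that in \<open>auto simp: mult.commute\<close>)
  qed (use s t in auto)
  then show ?thesis by simp
qed

lemma intbound:
  fixes f :: "real \<Rightarrow> real"
  assumes nn: "\<And>t. t \<ge> 0 \<Longrightarrow> f t \<ge> 0"
    and int: "\<And>T. T \<ge> 0 \<Longrightarrow> f integrable_on {0..T}"
    and le: "\<And>T. T \<ge> 0 \<Longrightarrow> integral {0..T} f \<le> C"
  shows "f integrable_on {0..}"
proof -
  define g where "g = (\<lambda>k::nat. \<lambda>t. if t \<le> real k then f t else 0)"
  have gi: "integral {0..} (g k) = integral {0..real k} f" and gint: "g k integrable_on {0..}" for k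
  proof -
    have e: "g k t = (if t \<in> {0..real k} then f t else 0)" if "t \<in> {0..}" for t
      using that by (simp add: g_def)
    have "(f has_integral integral {0..real k} f) {0..real k}" using int[of "real k"] by auto
    then have "((\<lambda>t. if t \<in> {0..real k} then f t else 0) has_integral integral {0..real k} f) {0..}"
      using has_integral_restrict[of "{0..real k}" "{0::real..}" f "integral {0..real k} f"] by simp
    then have "(g k has_integral integral {0..real k} f) {0..}"
      by (rule has_integral_eq[rotated]) (rule e[symmetric])
    then show "integral {0..} (g k) = integral {0..real k} f" "g k integrable_on {0..}"
      by auto
  qed
  have "f integrable_on {0..} \<and> ((\<lambda>k. integral {0..} (g k)) \<longlonglongrightarrow> integral {0..} f)"
  proof (rule monotone_convergence_increasing)
    show "g k integrable_on {0..}" for k by (rule gint)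
    show "g k t \<le> g (Suc k) t" if "t \<in> {0..}" for k t
      using that nn[of t] by (auto simp: g_def)
    show "(\<lambda>k. g k t) \<longlonglongrightarrow> f t" if "t \<in> {0..}" for t
    proof -
      obtain N where "real N \<ge> t" using real_arch_simple by blast
      then have "eventually (\<lambda>k. g k t = f t) sequentially"
        unfolding eventually_sequentially
      proof (intro exI allI impI)
        fix n assume "N \<le> n"
        then have "real N \<le> real n" by simp
        with \<open>real N \<ge> t\<close> have "t \<le> real n" by linarith
        then show "g n t = f t" by (simp add: g_def)
      qed
      then show ?thesis by (rule tendsto_eventually)
    qed
    show "bounded (range (\<lambda>k. integral {0..} (g k)))"
      unfolding bounded_iff
    proof (intro exI ballI)
      fix y assume "y \<in> range (\<lambda>k. integral {0..} (g k))"
      then obtain k where y: "y = integral {0..real k} f" using gi by auto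
      have "0 \<le> integral {0..real k} f"
        using int[of "real k"] nn by (intro integral_nonneg) auto
      then show "norm y \<le> C" using le[of "real k"] y by auto
    qed
  qed
  then show ?thesis by blast
qed

lemma barbalat:
  fixes f :: "real \<Rightarrow> real"
  assumes nn: "\<And>t. t \<ge> 0 \<Longrightarrow> f t \<ge> 0"
    and int: "f integrable_on {0..}"
    and lip: "\<And>s t. s \<ge> 0 \<Longrightarrow> t \<ge> 0 \<Longrightarrow> \<bar>f s - f t\<bar> \<le> L * \<bar>s - t\<bar>"
  shows "(f \<longlongrightarrow> 0) at_top"
proof (rule ccontr)
  define L' where "L' = max L 1"
  have L': "L' > 0" "L \<le> L'" by (auto simp: L'_def)
  have lip': "\<bar>f s - f t\<bar> \<le> L' * \<bar>s - t\<bar>" if "s \<ge> 0" "t \<ge> 0" for s t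
  proof -
    have "L * \<bar>s - t\<bar> \<le> L' * \<bar>s - t\<bar>" by (rule mult_right_mono) (use L' in auto)
    then show ?thesis using lip[OF that] by linarith
  qed
  assume "\<not> (f \<longlongrightarrow> 0) at_top"
  then obtain e where e: "e > 0" and ne: "\<not> eventually (\<lambda>t. dist (f t) 0 < e) at_top"
    unfolding tendsto_iff by blast
  have freq: "\<exists>t\<ge>T. f t \<ge> e" if "T \<ge> 0" for T
  proof (rule ccontr)
    assume "\<not> ?thesis"
    then have "\<forall>t\<ge>T. dist (f t) 0 < e" using nn that by force
    then have "eventually (\<lambda>t. dist (f t) 0 < e) at_top"
      unfolding eventually_at_top_linorder by (rule exI[where x=T])
    with ne show False by contradiction
  qed
  define d where "d = e / (2 * L')"
  have d: "d > 0" using e L' by (simp add: d_def)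
  have fi: "f integrable_on {a..b}" if "a \<ge> 0" for a b
    by (rule integrable_on_subinterval[OF int]) (use that in auto)
  define F where "F = (\<lambda>T. integral {0..T} f)"
  have Fle: "F T \<le> integral {0..} f" if "T \<ge> 0" for T
    unfolding F_def by (rule integral_subset_le) (use fi[of 0 T] int nn in auto)
  have Fadd: "F b = F a + integral {a..b} f" if "0 \<le> a" "a \<le> b" for a b
    unfolding F_def using Henstock_Kurzweil_Integration.integral_combine[of 0 a b f] that fi[of 0 b] by simp
  have bump: "integral {t..t+d} f \<ge> d * (e/2)" if "t \<ge> 0" "f t \<ge> e" for t
  proof -
    have "integral {t..t+d} (\<lambda>_. e/2) \<le> integral {t..t+d} f"
    proof (rule integral_le)
      show "(\<lambda>_. e/2) integrable_on {t..t+d}" by (rule integrable_const_ivl)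
      show "f integrable_on {t..t+d}" using fi that by auto
      fix s assume s: "s \<in> {t..t+d}"
      have "\<bar>f s - f t\<bar> \<le> L' * \<bar>s - t\<bar>" using lip'[of s t] s that by auto
      also have "\<dots> \<le> L' * d" using s L' by (intro mult_left_mono) auto
      also have "\<dots> = e/2" using L' by (simp add: d_def)
      finally show "e/2 \<le> f s" using that by linarith
    qed
    then show ?thesis using d by simp
  qed
  define S where "S = (SUP T\<in>{0..}. F T)"
  have bdd: "bdd_above (F ` {0..})" using Fle by (auto intro!: bdd_aboveI)
  have "S - d * (e/2) < S" using d e by simp
  then have "\<exists>T\<in>{0..}. S - d * (e/2) < F T"
    unfolding S_def by (rule less_cSUP_iff[OF _ bdd, THEN iffD1, rotated]) simp
  then obtain T0 where T0: "T0 \<ge> 0" "S - d * (e/2) < F T0" by auto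
  obtain t where t: "t \<ge> T0" "f t \<ge> e" using freq[OF T0(1)] by blast
  have "0 \<le> integral {T0..t} f"
    by (rule integral_nonneg) (use fi[of T0 t] T0 t nn in auto)
  then have "F T0 \<le> F t" using Fadd[of T0 t] T0 t by linarith
  moreover have "F (t + d) = F t + integral {t..t+d} f" using Fadd[of t "t+d"] t T0 d by auto
  moreover have "F (t + d) \<le> S" unfolding S_def by (rule cSUP_upper[OF _ bdd]) (use t T0 d in auto)
  ultimately show False using bump[of t] t T0 by linarith
qed

lemma alg:
  fixes a b :: "'a::real_inner"
  shows "(1 + \<alpha> * \<beta>) * (b \<bullet> a) +
        ((a + \<beta> *\<^sub>R b) \<bullet> (- \<alpha> *\<^sub>R a - b) + (- \<alpha> *\<^sub>R a - b) \<bullet> (a + \<beta> *\<^sub>R b)) / 2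
     = - (\<alpha> * (a \<bullet> a) + \<beta> * (b \<bullet> b))"
proof -
  have "(- \<alpha> *\<^sub>R a - b) \<bullet> (a + \<beta> *\<^sub>R b) = (a + \<beta> *\<^sub>R b) \<bullet> (- \<alpha> *\<^sub>R a - b)"
    by (rule inner_commute)
  moreover have "(a + \<beta> *\<^sub>R b) \<bullet> (- \<alpha> *\<^sub>R a - b) = - \<alpha> * (a \<bullet> a) - a \<bullet> b - \<alpha> * \<beta> * (b \<bullet> a) - \<beta> * (b \<bullet> b)"
    by (simp add: inner_add_left inner_diff_right algebra_simps)
  moreover have "a \<bullet> b = b \<bullet> a" by (rule inner_commute)
  ultimately show ?thesis by (simp add: field_simps)
qed

lemma sqdiff:
  fixes a b :: "'a::real_normed_vector"
  assumes "norm a \<le> B" "norm b \<le> B"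
  shows "\<bar>(norm a)\<^sup>2 - (norm b)\<^sup>2\<bar> \<le> 2 * B * norm (a - b)"
proof -
  have "(norm a)\<^sup>2 - (norm b)\<^sup>2 = (norm a - norm b) * (norm a + norm b)"
    by (simp add: power2_eq_square algebra_simps)
  then have "\<bar>(norm a)\<^sup>2 - (norm b)\<^sup>2\<bar> = \<bar>norm a - norm b\<bar> * (norm a + norm b)"
    by (simp add: abs_mult)
  also have "\<dots> \<le> norm (a - b) * (2 * B)"
    by (rule mult_mono[OF norm_triangle_ineq3]) (use assms in auto)
  finally show ?thesis by (simp add: mult.commute)
qed

lemma sqlim:
  fixes f :: "real \<Rightarrow> 'a::real_normed_vector"
  assumes "((\<lambda>t. (norm (f t))\<^sup>2) \<longlongrightarrow> 0) F"
  shows "(f \<longlongrightarrow> 0) F"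
proof -
  have "((\<lambda>t. sqrt ((norm (f t))\<^sup>2)) \<longlongrightarrow> sqrt 0) F"
    by (rule tendsto_real_sqrt[OF assms])
  then have "((\<lambda>t. norm (f t)) \<longlongrightarrow> 0) F" by simp
  then show ?thesis by (rule tendsto_norm_zero_cancel)
qed

lemma dlemma:
  fixes x v :: "real \<Rightarrow> real ^ 'n" and gradPhi :: "real ^ 'n \<Rightarrow> real ^ 'n"
  assumes gcont: "continuous_on UNIV gradPhi" and Kc: "compact K"
    and xK: "\<And>t. t \<ge> 0 \<Longrightarrow> x t \<in> K"
    and vlim: "(v \<longlongrightarrow> 0) at_top"
    and glim: "((\<lambda>t. gradPhi (x t)) \<longlongrightarrow> 0) at_top"
  shows "((\<lambda>t. infdist (x t, v t) {(y, w). w = 0 \<and> gradPhi y = 0}) \<longlongrightarrow> 0) at_top"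
  proof (rule ccontr)
    let ?S = "{(y, w). w = 0 \<and> gradPhi y = 0}"
    let ?D = "\<lambda>t. infdist (x t, v t) ?S"
    assume "\<not> (?D \<longlongrightarrow> 0) at_top"
    then obtain e where e: "e > 0" and ne: "\<not> eventually (\<lambda>t. dist (?D t) 0 < e) at_top"
      unfolding tendsto_iff by blast
    have ex: "\<exists>t. t \<ge> real n \<and> \<not> dist (?D t) 0 < e" for n :: nat
    proof (rule ccontr)
      assume "\<not> ?thesis"
      then have "\<forall>t\<ge>real n. dist (?D t) 0 < e" by auto
      then have "eventually (\<lambda>t. dist (?D t) 0 < e) at_top"
        unfolding eventually_at_top_linorder by (rule exI[where x="real n"])
      with ne show False by contradiction
    qed
    then have "\<forall>n. \<exists>t. t \<ge> real n \<and> \<not> dist (?D t) 0 < e" by (rule allI)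
    from choice[OF this] obtain tt where tt0': "\<forall>n. tt n \<ge> real n \<and> \<not> dist (?D (tt n)) 0 < e"
      by (elim exE)
    have tt: "tt n \<ge> real n" "\<not> dist (?D (tt n)) 0 < e" for n using tt0' by auto
    have tt0: "tt n \<ge> 0" for n using tt(1)[of n] of_nat_0_le_iff[of n] by linarith
    have ttlim: "filterlim tt at_top sequentially"
      by (rule filterlim_at_top_mono[OF filterlim_real_sequentially]) (use tt(1) in auto)
    have "seq_compact K" using Kc compact_eq_seq_compact_metric by blast
    moreover have "\<forall>n. x (tt n) \<in> K" using xK tt0 by blast
    ultimately obtain l r where l: "l \<in> K" and r: "strict_mono r"
      and lim: "((\<lambda>n. x (tt n)) \<circ> r) \<longlonglongrightarrow> l"
      by (rule seq_compactE)
    have trlim: "filterlim (\<lambda>n. tt (r n)) at_top sequentially"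
      using filterlim_compose[OF ttlim filterlim_subseq[OF r]] by simp
    have xl: "(\<lambda>n. x (tt (r n))) \<longlonglongrightarrow> l" using lim by (simp add: o_def)
    have "(\<lambda>n. gradPhi (x (tt (r n)))) \<longlonglongrightarrow> gradPhi l"
      using gcont xl by (intro isCont_tendsto_compose[where g=gradPhi]) (auto simp: continuous_on_eq_continuous_at)
    moreover have "(\<lambda>n. gradPhi (x (tt (r n)))) \<longlonglongrightarrow> 0"
      using filterlim_compose[OF glim trlim] .
    ultimately have gl: "gradPhi l = 0" by (rule LIMSEQ_unique)
    have vl: "(\<lambda>n. v (tt (r n))) \<longlonglongrightarrow> 0" using filterlim_compose[OF vlim trlim] .
    have "(\<lambda>n. (x (tt (r n)), v (tt (r n)))) \<longlonglongrightarrow> (l, 0)"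
      by (intro tendsto_Pair xl vl)
    then have "eventually (\<lambda>n. dist (x (tt (r n)), v (tt (r n))) (l, 0) < e) sequentially"
      using e unfolding tendsto_iff by blast
    then obtain n where n: "dist (x (tt (r n)), v (tt (r n))) (l, 0) < e"
      unfolding eventually_sequentially by blast
    have "?D (tt (r n)) \<le> dist (x (tt (r n)), v (tt (r n))) (l, 0)"
      by (rule infdist_le) (simp add: gl)
    moreover have "?D (tt (r n)) \<ge> 0" by (rule infdist_nonneg)
    ultimately show False using tt(2)[of "r n"] n by simp
  qed

theorem mainTheorem10:
  fixes \<Phi> :: "real ^ 'n \<Rightarrow> real"
    and gradPhi :: "real ^ 'n \<Rightarrow> real ^ 'n"
    and hessPhi :: "real ^ 'n \<Rightarrow> real ^ 'n ^ 'n"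
    and \<alpha> \<beta> :: real
    and x v :: "real \<Rightarrow> real ^ 'n"
  assumes grad: "\<And>y. (\<Phi> has_derivative (\<lambda>h. gradPhi y \<bullet> h)) (at y)"
    and hess: "\<And>y. (gradPhi has_derivative (\<lambda>h. hessPhi y *v h)) (at y)"
    and hess_cont: "continuous_on UNIV hessPhi"
    and bdd_below: "\<exists>m. \<forall>y. m \<le> \<Phi> y"
    and hess_lip: "\<And>B. bounded B \<Longrightarrow> \<exists>L. lipschitz_on L B hessPhi"
    and \<alpha>_pos: "\<alpha> > 0" and \<beta>_pos: "\<beta> > 0"
    and x_ode: "\<And>t. t \<ge> 0 \<Longrightarrow> (x has_vector_derivative v t) (at t within {0..})"
    and v_ode: "\<And>t. t \<ge> 0 \<Longrightarrow>
        (v has_vector_derivative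
           (- \<alpha> *\<^sub>R v t - gradPhi (x t) - \<beta> *\<^sub>R (hessPhi (x t) *v v t))) (at t within {0..})"
    and bdd: "bounded ((\<lambda>t. (x t, v t)) ` {0..})"
  shows "(\<lambda>t. (norm (v t))\<^sup>2) integrable_on {0..} \<and>
         (\<lambda>t. (norm (gradPhi (x t)))\<^sup>2) integrable_on {0..} \<and>
         (v \<longlongrightarrow> 0) at_top \<and>
         ((\<lambda>t. gradPhi (x t)) \<longlongrightarrow> 0) at_top \<and>
         ((\<lambda>t. infdist (x t, v t) {(y, w). w = 0 \<and> gradPhi y = 0}) \<longlongrightarrow> 0) at_top"
proof -
  obtain m where m: "\<And>y. m \<le> \<Phi> y" using bdd_below by blast
  have gcont: "continuous_on UNIV gradPhi"
    by (rule has_derivative_continuous_on[of UNIV gradPhi "\<lambda>y h. hessPhi y *v h"]) (simp add: hess)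
  have dx: "(x has_derivative (\<lambda>h. h *\<^sub>R v t)) (at t within {0..})" if "t \<ge> 0" for t
    using x_ode[OF that] by (simp add: has_vector_derivative_def)
  have dg: "((\<lambda>t. gradPhi (x t)) has_vector_derivative (hessPhi (x t) *v v t)) (at t within {0..})"
    if "t \<ge> 0" for t
    using has_derivative_compose[OF dx[OF that] hess]
    by (simp add: has_vector_derivative_def matrix_vector_mult_scaleR)
  have dP: "((\<lambda>t. \<Phi> (x t)) has_vector_derivative (gradPhi (x t) \<bullet> v t)) (at t within {0..})"
    if "t \<ge> 0" for t
    using has_derivative_compose[OF dx[OF that] grad]
    by (simp add: has_vector_derivative_def)
  define w where "w = (\<lambda>t. v t + \<beta> *\<^sub>R gradPhi (x t))"
  have dw: "(w has_vector_derivative (- \<alpha> *\<^sub>R v t - gradPhi (x t))) (at t within {0..})"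
    if "t \<ge> 0" for t
  proof -
    have "(w has_vector_derivative
       ((- \<alpha> *\<^sub>R v t - gradPhi (x t) - \<beta> *\<^sub>R (hessPhi (x t) *v v t)) + \<beta> *\<^sub>R (hessPhi (x t) *v v t)))
       (at t within {0..})"
      unfolding w_def
      by (intro has_vector_derivative_add v_ode that bounded_linear.has_vector_derivative[OF bounded_linear_scaleR_right] dg)
    then show ?thesis by simp
  qed
  define E where "E = (\<lambda>t. (1 + \<alpha> * \<beta>) * \<Phi> (x t) + (w t \<bullet> w t) / 2)"
  define h where "h = (\<lambda>t. \<alpha> * (norm (v t))\<^sup>2 + \<beta> * (norm (gradPhi (x t)))\<^sup>2)"
  have dE: "(E has_vector_derivative (- h t)) (at t within {0..})" if "t \<ge> 0" for t
  proof -
    have "(E has_vector_derivative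
       ((1 + \<alpha> * \<beta>) * (gradPhi (x t) \<bullet> v t) +
        (w t \<bullet> (- \<alpha> *\<^sub>R v t - gradPhi (x t)) + (- \<alpha> *\<^sub>R v t - gradPhi (x t)) \<bullet> w t) / 2))
       (at t within {0..})"
      unfolding E_def
      by (intro has_vector_derivative_add has_vector_derivative_mult_right dP that
            has_vector_derivative_divide bounded_bilinear.has_vector_derivative[OF bounded_bilinear_inner] dw)
    moreover have "(1 + \<alpha> * \<beta>) * (gradPhi (x t) \<bullet> v t) +
        (w t \<bullet> (- \<alpha> *\<^sub>R v t - gradPhi (x t)) + (- \<alpha> *\<^sub>R v t - gradPhi (x t)) \<bullet> w t) / 2 = - h t"
      unfolding w_def h_def power2_norm_eq_inner
      using alg[of \<alpha> \<beta> "gradPhi (x t)" "v t"] by simp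
    ultimately show ?thesis by simp
  qed
  have hnn: "h t \<ge> 0" for t using \<alpha>_pos \<beta>_pos by (simp add: h_def)
  have Elow: "E t \<ge> (1 + \<alpha> * \<beta>) * m" for t
  proof -
    have "(1 + \<alpha> * \<beta>) * m \<le> (1 + \<alpha> * \<beta>) * \<Phi> (x t)"
      using m \<alpha>_pos \<beta>_pos by (intro mult_left_mono) auto
    moreover have "w t \<bullet> w t / 2 \<ge> 0" by simp
    ultimately show ?thesis unfolding E_def by linarith
  qed
  have hint: "(h has_integral (E 0 - E T)) {0..T}" if "T \<ge> 0" for T
  proof -
    have "((\<lambda>t. - h t) has_integral (E T - E 0)) {0..T}"
      using that by (intro fundamental_theorem_of_calculus)
        (auto intro: has_vector_derivative_within_subset[OF dE])
    from has_integral_neg[OF this] show ?thesis by simp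
  qed
  obtain B where B: "\<And>t. t \<ge> 0 \<Longrightarrow> norm (x t) \<le> B \<and> norm (v t) \<le> B"
  proof -
    from bdd obtain a where a: "\<And>p. p \<in> (\<lambda>t. (x t, v t)) ` {0..} \<Longrightarrow> norm p \<le> a"
      unfolding bounded_iff by blast
    show ?thesis
    proof (rule that)
      fix t :: real assume "t \<ge> 0"
      then have "norm (x t, v t) \<le> a" using a by auto
      then show "norm (x t) \<le> a \<and> norm (v t) \<le> a"
        using norm_fst_le[of "x t" "v t"] norm_snd_le[of "v t" "x t"] by auto
    qed
  qed
  have B0: "B \<ge> 0" using B[of 0] norm_ge_zero[of "x 0"] by linarith
  define K where "K = cball (0::real^'n) B"
  have Kc: "compact K" by (simp add: K_def)
  have xK: "x t \<in> K" if "t \<ge> 0" for t using B[OF that] by (simp add: K_def)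
  obtain G where G: "\<And>y. y \<in> K \<Longrightarrow> norm (gradPhi y) \<le> G"
  proof -
    have "bounded (gradPhi ` K)"
      by (intro compact_imp_bounded compact_continuous_image Kc continuous_on_subset[OF gcont]) auto
    then show ?thesis using that unfolding bounded_iff by blast
  qed
  obtain HB where HB: "\<And>y. y \<in> K \<Longrightarrow> norm (hessPhi y) \<le> HB"
  proof -
    have "bounded (hessPhi ` K)"
      by (intro compact_imp_bounded compact_continuous_image Kc continuous_on_subset[OF hess_cont]) auto
    then show ?thesis using that unfolding bounded_iff by blast
  qed
  define C where "C = real CARD('n) * real CARD('n) * HB"
  have Hv: "norm (hessPhi y *v u) \<le> C * norm u" if "y \<in> K" for y u
  proof -
    have "onorm ((*v) (hessPhi y)) \<le> C"
      unfolding C_def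
    proof (rule onorm_le_matrix_component)
      fix i j
      have "\<bar>hessPhi y $ i $ j\<bar> \<le> norm (hessPhi y $ i)" by (rule component_le_norm_cart)
      also have "\<dots> \<le> norm (hessPhi y)" by (rule Finite_Cartesian_Product.norm_nth_le)
      finally show "\<bar>hessPhi y $ i $ j\<bar> \<le> HB" using HB[OF that] by linarith
    qed
    then show ?thesis
      using onorm[OF matrix_vector_mul_bounded_linear[of "hessPhi y"], of u]
      by (meson mult_right_mono norm_ge_zero order_trans)
  qed
  have HB0: "HB \<ge> 0" using HB[OF xK[of 0]] norm_ge_zero[of "hessPhi (x 0)"] by linarith
  have C0: "C \<ge> 0" using HB0 by (simp add: C_def)
  define Kv where "Kv = \<alpha> * B + G + \<beta> * (C * B)"
  define Kg where "Kg = C * B"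
  have G0: "G \<ge> 0" using G[OF xK[of 0]] norm_ge_zero[of "gradPhi (x 0)"] by linarith
  have vlip: "norm (v s - v t) \<le> Kv * \<bar>s - t\<bar>" if "s \<ge> 0" "t \<ge> 0" for s t
  proof (rule mvt1[OF v_ode _ that])
    fix t :: real assume t: "t \<ge> 0"
    have "norm (- \<alpha> *\<^sub>R v t - gradPhi (x t) - \<beta> *\<^sub>R (hessPhi (x t) *v v t))
        \<le> norm (\<alpha> *\<^sub>R v t) + norm (gradPhi (x t)) + norm (\<beta> *\<^sub>R (hessPhi (x t) *v v t))"
    proof -
      have "norm (- \<alpha> *\<^sub>R v t - gradPhi (x t) - \<beta> *\<^sub>R (hessPhi (x t) *v v t))
          \<le> norm (- \<alpha> *\<^sub>R v t - gradPhi (x t)) + norm (\<beta> *\<^sub>R (hessPhi (x t) *v v t))"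
        by (rule norm_triangle_ineq4)
      moreover have "norm (- \<alpha> *\<^sub>R v t - gradPhi (x t)) \<le> norm (- \<alpha> *\<^sub>R v t) + norm (gradPhi (x t))"
        by (rule norm_triangle_ineq4)
      moreover have "norm (- \<alpha> *\<^sub>R v t) = norm (\<alpha> *\<^sub>R v t)"
        by (metis norm_minus_cancel scaleR_minus_left)
      ultimately show ?thesis by linarith
    qed
    also have "\<dots> \<le> \<alpha> * B + G + \<beta> * (C * B)"
    proof -
      have "norm (\<alpha> *\<^sub>R v t) \<le> \<alpha> * B" using B[OF t] \<alpha>_pos by (simp add: mult_left_mono)
      moreover have "norm (gradPhi (x t)) \<le> G" using G[OF xK[OF t]] .
      moreover have "norm (hessPhi (x t) *v v t) \<le> C * B"
        using Hv[OF xK[OF t], of "v t"] B[OF t] C0 by (meson mult_left_mono order_trans)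
      then have "norm (\<beta> *\<^sub>R (hessPhi (x t) *v v t)) \<le> \<beta> * (C * B)"
        using \<beta>_pos by (simp add: mult_left_mono)
      ultimately show ?thesis by linarith
    qed
    finally show "norm (- \<alpha> *\<^sub>R v t - gradPhi (x t) - \<beta> *\<^sub>R (hessPhi (x t) *v v t)) \<le> Kv"
      by (simp add: Kv_def)
  qed
  have glip: "norm (gradPhi (x s) - gradPhi (x t)) \<le> Kg * \<bar>s - t\<bar>" if "s \<ge> 0" "t \<ge> 0" for s t
  proof (rule mvt1[OF dg _ that])
    fix t :: real assume t: "t \<ge> 0"
    show "norm (hessPhi (x t) *v v t) \<le> Kg"
      unfolding Kg_def using Hv[OF xK[OF t], of "v t"] B[OF t] C0 by (meson mult_left_mono order_trans)
  qed
  have vcont: "continuous_on {0..T} v" for T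
  proof (rule has_derivative_continuous_on)
    fix t assume "t \<in> {0..T}"
    then show "(v has_derivative (\<lambda>h. h *\<^sub>R (- \<alpha> *\<^sub>R v t - gradPhi (x t) - \<beta> *\<^sub>R (hessPhi (x t) *v v t)))) (at t within {0..T})"
      using v_ode[of t] unfolding has_vector_derivative_def
      by (auto intro: has_derivative_subset)
  qed
  have gxcont: "continuous_on {0..T} (\<lambda>t. gradPhi (x t))" for T
  proof (rule has_derivative_continuous_on)
    fix t assume "t \<in> {0..T}"
    then show "((\<lambda>t. gradPhi (x t)) has_derivative (\<lambda>h. h *\<^sub>R (hessPhi (x t) *v v t))) (at t within {0..T})"
      using dg[of t] unfolding has_vector_derivative_def
      by (auto intro: has_derivative_subset)
  qed
  define Cb where "Cb = E 0 - (1 + \<alpha> * \<beta>) * m"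
  have hle: "integral {0..T} h \<le> Cb" if "T \<ge> 0" for T
    using integral_unique[OF hint[OF that]] Elow[of T] by (simp add: Cb_def)
  have I1: "(\<lambda>t. (norm (v t))\<^sup>2) integrable_on {0..}"
  proof (rule intbound)
    show "(\<lambda>t. (norm (v t))\<^sup>2) integrable_on {0..T}" for T
      by (intro integrable_continuous_real continuous_intros vcont)
    show "integral {0..T} (\<lambda>t. (norm (v t))\<^sup>2) \<le> Cb / \<alpha>" if "T \<ge> 0" for T
    proof -
      have "integral {0..T} (\<lambda>t. (norm (v t))\<^sup>2) \<le> integral {0..T} (\<lambda>t. h t / \<alpha>)"
      proof (rule integral_le)
        show "(\<lambda>t. (norm (v t))\<^sup>2) integrable_on {0..T}"
          by (intro integrable_continuous_real continuous_intros vcont)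
        show "(\<lambda>t. h t / \<alpha>) integrable_on {0..T}"
          using has_integral_divide[OF hint[OF that]] by blast
        fix t show "(norm (v t))\<^sup>2 \<le> h t / \<alpha>"
          using \<alpha>_pos \<beta>_pos by (simp add: h_def field_simps)
      qed
      also have "\<dots> = integral {0..T} h / \<alpha>"
        using integral_unique[OF has_integral_divide[OF hint[OF that]]] integral_unique[OF hint[OF that]]
        by simp
      also have "\<dots> \<le> Cb / \<alpha>" using hle[OF that] \<alpha>_pos by (simp add: divide_right_mono)
      finally show ?thesis .
    qed
  qed simp
  have I2: "(\<lambda>t. (norm (gradPhi (x t)))\<^sup>2) integrable_on {0..}"
  proof (rule intbound)
    show "(\<lambda>t. (norm (gradPhi (x t)))\<^sup>2) integrable_on {0..T}" for T
      by (intro integrable_continuous_real continuous_intros gxcont)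
    show "integral {0..T} (\<lambda>t. (norm (gradPhi (x t)))\<^sup>2) \<le> Cb / \<beta>" if "T \<ge> 0" for T
    proof -
      have "integral {0..T} (\<lambda>t. (norm (gradPhi (x t)))\<^sup>2) \<le> integral {0..T} (\<lambda>t. h t / \<beta>)"
      proof (rule integral_le)
        show "(\<lambda>t. (norm (gradPhi (x t)))\<^sup>2) integrable_on {0..T}"
          by (intro integrable_continuous_real continuous_intros gxcont)
        show "(\<lambda>t. h t / \<beta>) integrable_on {0..T}"
          using has_integral_divide[OF hint[OF that]] by blast
        fix t show "(norm (gradPhi (x t)))\<^sup>2 \<le> h t / \<beta>"
          using \<alpha>_pos \<beta>_pos by (simp add: h_def field_simps)
      qed
      also have "\<dots> = integral {0..T} h / \<beta>"
        using integral_unique[OF has_integral_divide[OF hint[OF that]]] integral_unique[OF hint[OF that]]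
        by simp
      also have "\<dots> \<le> Cb / \<beta>" using hle[OF that] \<beta>_pos by (simp add: divide_right_mono)
      finally show ?thesis .
    qed
  qed simp
  have vlim: "(v \<longlongrightarrow> 0) at_top"
  proof (rule sqlim, rule barbalat[OF _ I1])
    fix s t :: real assume st: "s \<ge> 0" "t \<ge> 0"
    have "\<bar>(norm (v s))\<^sup>2 - (norm (v t))\<^sup>2\<bar> \<le> 2 * B * norm (v s - v t)"
      using B[OF st(1)] B[OF st(2)] by (intro sqdiff) auto
    also have "\<dots> \<le> 2 * B * (Kv * \<bar>s - t\<bar>)" using vlip[OF st] B0 by (intro mult_left_mono) auto
    finally show "\<bar>(norm (v s))\<^sup>2 - (norm (v t))\<^sup>2\<bar> \<le> (2 * B * Kv) * \<bar>s - t\<bar>" by simp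
  qed simp
  have glim: "((\<lambda>t. gradPhi (x t)) \<longlongrightarrow> 0) at_top"
  proof (rule sqlim, rule barbalat[OF _ I2])
    fix s t :: real assume st: "s \<ge> 0" "t \<ge> 0"
    have "\<bar>(norm (gradPhi (x s)))\<^sup>2 - (norm (gradPhi (x t)))\<^sup>2\<bar> \<le> 2 * G * norm (gradPhi (x s) - gradPhi (x t))"
      using G[OF xK[OF st(1)]] G[OF xK[OF st(2)]] by (intro sqdiff) auto
    also have "\<dots> \<le> 2 * G * (Kg * \<bar>s - t\<bar>)" using glip[OF st] G0 by (intro mult_left_mono) auto
    finally show "\<bar>(norm (gradPhi (x s)))\<^sup>2 - (norm (gradPhi (x t)))\<^sup>2\<bar> \<le> (2 * G * Kg) * \<bar>s - t\<bar>" by simp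
  qed simp
  have dlim: "((\<lambda>t. infdist (x t, v t) {(y, w). w = 0 \<and> gradPhi y = 0}) \<longlongrightarrow> 0) at_top"
    by (rule dlemma[OF gcont Kc xK vlim glim])
  show ?thesis using I1 I2 vlim glim dlim by blast
qed

end
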